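(* Let $n,r$ be integers with $n\ge r+2\ge 2$, let $\sigma\colon\{1,\dots,r\}\to\{1,\dots,n-1\}$ be injective, and let $\Delta'=(x^{(\sigma(1))}_1,\dots,x^{(\sigma(r))}_r)$. There is a constant $C>0$ such that for every $w$ in the commutator subgroup $[F_r,F_r]$ of $F_r=F(t_1,\dots,t_r)$, $$\mathrm{Area}\big(w(\Delta)\,w(\Delta')^{-1}\big)\le C\cdot|w|^2.$$
   Context: For $\alpha\in\{1,\dots,n\}$ let $F^{(\alpha)}$ be the free group on $a^{(\alpha)}_1,\dots,a^{(\alpha)}_r$, let $\psi\colon F^{(1)}\times\cdots\times F^{(n)}\to\mathbb Z^r$ send each $a^{(\alpha)}_j$ to $e_j$, and $K=\ker\psi$. For $\alpha\in\{1,\dots,n-1\}$, $j\in\{1,\dots,r\}$, $x^{(\alpha)}_j=a^{(\alpha)}_j(a^{(n)}_j)^{-1}$; $X$ is the set of all $x^{(\alpha)}_j$ and $F(X)$ the abstract free group on it; $\Delta=(x^{(1)}_1,x^{(2)}_2,\dots,x^{(r)}_r)$. For $w\in F_r=F(t_1,\dots,t_r)$ and a tuple $S=(s_1,\dots,s_r)$ of elements of $F(X)$, $w(S)\in F(X)$ is the image of $w$ under $t_i\mapsto s_i$; $|w|$ is the word length of $w$ in $F_r$. $[g,h]=ghg^{-1}h^{-1}$. Let $\mathcal R=\mathcal R_1\cup\mathcal R_2$ with $\mathcal R_1=\{[x^{(\alpha)}_i,x^{(\beta)}_i]:\alpha\ne\beta\}$, $\mathcal R_2=\{[x^{(\alpha)}_i,x^{(\beta)}_j(x^{(\gamma)}_j)^{-1}]: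 i\neq j,\ \alpha,\beta,\gamma\in\{1,\dots,n-1\}\text{ pairwise distinct}\}$, a set of defining relators for $K$ on $X$. $\mathrm{Area}(u)$ for $u\in F(X)$ is the least number of conjugates of elements of $\mathcal R^{\pm1}$ whose product equals $u$ in $F(X)$. *)

theory Defs
  imports "HOL-Library.Extended_Real"
begin

text \<open>Words in a free group: lists of letters (b, a), where b = True means
 the generator a and b = False means its inverse.\<close>

type_synonym 'a word = "(bool \<times> 'a) list"

fun cancels :: "bool \<times> 'a \<Rightarrow> bool \<times> 'a \<Rightarrow> bool" where
  "cancels (b, a) (c, d) \<longleftrightarrow> (a = d \<and> b \<noteq> c)"

fun reduce :: "'a word \<Rightarrow> 'a word" where
  "reduce [] = []"
| "reduce (x # xs) = (case reduce xs of [] \<Rightarrow> [x]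
      | y # ys \<Rightarrow> (if cancels x y then ys else x # y # ys))"

definition inv_word :: "'a word \<Rightarrow> 'a word" where
  "inv_word w = rev (map (\<lambda>(b, a). (\<not> b, a)) w)"

definition words_over :: "'a set \<Rightarrow> 'a word set" where
  "words_over A = {w. \<forall>x \<in> set w. snd x \<in> A}"

definition gen :: "'a \<Rightarrow> 'a word" where
  "gen a = [(True, a)]"

definition commw :: "'a word \<Rightarrow> 'a word \<Rightarrow> 'a word" where
  "commw g h = g @ h @ inv_word g @ inv_word h"

definition word_length :: "'a word \<Rightarrow> nat" where
  "word_length w = length (reduce w)"

definition subst :: "('a \<Rightarrow> 'b word) \<Rightarrow> 'a word \<Rightarrow> 'b word" where
  "subst s w = concat (map (\<lambda>(b, a). if b then s a else inv_word (s a)) w)"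

inductive comm_prod :: "nat \<Rightarrow> nat word \<Rightarrow> bool" for r where
  empty: "comm_prod r []"
| step: "comm_prod r c \<Longrightarrow> u \<in> words_over {1..r} \<Longrightarrow> v \<in> words_over {1..r}
          \<Longrightarrow> comm_prod r (c @ commw u v)"

text \<open>The commutator subgroup [F_r,F_r] (generated by commutators; since the inverse of a
 commutator is a commutator, its elements are the products of commutators).\<close>
definition commutator_subgroup :: "nat \<Rightarrow> nat word set" where
  "commutator_subgroup r = {w \<in> words_over {1..r}. \<exists>c. comm_prod r c \<and> reduce w = reduce c}"

text \<open>Generators x^{(alpha)}_j are the pairs (alpha, j).\<close>
definition Xset :: "nat \<Rightarrow> nat \<Rightarrow> (nat \<times> nat) set" where
  "Xset n r = {1..n-1} \<times> {1..r}"

definition x :: "nat \<Rightarrow> nat \<Rightarrow> (nat \<times> nat) word" where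
  "x \<alpha> j = gen (\<alpha>, j)"

definition R1 :: "nat \<Rightarrow> nat \<Rightarrow> (nat \<times> nat) word set" where
  "R1 n r = {commw (x \<alpha> i) (x \<beta> i) | \<alpha> \<beta> i.
      \<alpha> \<in> {1..n-1} \<and> \<beta> \<in> {1..n-1} \<and> i \<in> {1..r} \<and> \<alpha> \<noteq> \<beta>}"

definition R2 :: "nat \<Rightarrow> nat \<Rightarrow> (nat \<times> nat) word set" where
  "R2 n r = {commw (x \<alpha> i) (x \<beta> j @ inv_word (x \<gamma> j)) | \<alpha> \<beta> \<gamma> i j.
      \<alpha> \<in> {1..n-1} \<and> \<beta> \<in> {1..n-1} \<and> \<gamma> \<in> {1..n-1} \<and> i \<in> {1..r} \<and> j \<in> {1..r}
      \<and> i \<noteq> j \<and> \<alpha> \<noteq> \<beta> \<and> \<alpha> \<noteq> \<gamma> \<and> \<beta> \<noteq> \<gamma>}"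

definition Rel :: "nat \<Rightarrow> nat \<Rightarrow> (nat \<times> nat) word set" where
  "Rel n r = R1 n r \<union> R2 n r"

definition conj_rel :: "nat \<Rightarrow> nat \<Rightarrow> (nat \<times> nat) word \<Rightarrow> bool" where
  "conj_rel n r c \<longleftrightarrow> (\<exists>g \<rho>. g \<in> words_over (Xset n r) \<and>
      (\<rho> \<in> Rel n r \<or> inv_word \<rho> \<in> Rel n r) \<and> c = g @ \<rho> @ inv_word g)"

text \<open>Area: least number of such conjugates whose product equals u in F(X)
 (infinity if there is none).\<close>
definition Area :: "nat \<Rightarrow> nat \<Rightarrow> (nat \<times> nat) word \<Rightarrow> ereal" where
  "Area n r u = Inf {ereal (real (length cs)) | cs.
      (\<forall>c \<in> set cs. conj_rel n r c) \<and> reduce u = reduce (concat cs)}"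

end

theory Submission
  imports Defs
begin

fun cons_red :: "bool \<times> 'a \<Rightarrow> 'a word \<Rightarrow> 'a word" where
  "cons_red p [] = [p]"
| "cons_red p (y # ys) = (if cancels p y then ys else p # y # ys)"

lemma reduce_Cons: "reduce (p # xs) = cons_red p (reduce xs)"
  by (cases "reduce xs") auto

fun reduced :: "'a word \<Rightarrow> bool" where
  "reduced [] = True"
| "reduced [a] = True"
| "reduced (a # b # l) = (\<not> cancels a b \<and> reduced (b # l))"

lemma reduced_tl: "reduced (a # l) \<Longrightarrow> reduced l"
  by (cases l) auto

lemma cancels_trans: "cancels p y \<Longrightarrow> cancels y q \<Longrightarrow> p = q"
  by (cases p; cases y; cases q) auto

lemma cancels_sym: "cancels p y \<Longrightarrow> cancels y p"
  by (cases p; cases y) auto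

lemma cons_red_reduced: "reduced L \<Longrightarrow> reduced (cons_red p L)"
  by (cases L rule: reduced.cases) (auto intro: reduced_tl)

lemma reduce_reduced: "reduced (reduce xs)"
  by (induction xs) (auto simp: reduce_Cons cons_red_reduced simp del: reduce.simps(2))

lemma cancel_lemma: "reduced L \<Longrightarrow> cancels p y \<Longrightarrow> cons_red p (cons_red y L) = L"
proof (cases L)
  case (Cons q zs)
  assume R: "reduced L" and c: "cancels p y"
  show ?thesis
  proof (cases "cancels y q")
    case True
    then have xz: "p = q" using c cancels_trans by blast
    show ?thesis
    proof (cases zs)
      case Nil then show ?thesis using Cons True xz by simp
    next
      case (Cons u us)
      have "\<not> cancels q u" using R \<open>L = q # zs\<close> Cons by simp
      then show ?thesis using \<open>L = q # zs\<close> Cons True xz by simp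
    qed
  next
    case False then show ?thesis using Cons c by simp
  qed
qed (auto simp: cancels_sym)

lemma foldr_reduced: "reduced L \<Longrightarrow> reduced (foldr cons_red xs L)"
  by (induction xs) (auto simp: cons_red_reduced)

lemma reduce_append: "reduce (xs @ ys) = foldr cons_red xs (reduce ys)"
  by (induction xs) (auto simp: reduce_Cons simp del: reduce.simps(2))

lemma foldr_cons_red: "reduced R \<Longrightarrow> reduced L \<Longrightarrow>
   foldr cons_red (cons_red p R) L = cons_red p (foldr cons_red R L)"
proof (cases R)
  case (Cons y ys)
  assume RR: "reduced R" and L: "reduced L"
  have F: "reduced (foldr cons_red ys L)" using foldr_reduced L by blast
  show ?thesis
  proof (cases "cancels p y")
    case True
    then show ?thesis using Cons cancel_lemma[OF F True] by simp
  qed (use Cons in simp)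
qed auto

lemma foldr_reduce: "reduced L \<Longrightarrow> foldr cons_red (reduce xs) L = foldr cons_red xs L"
  by (induction xs) (auto simp: reduce_Cons foldr_cons_red reduce_reduced simp del: reduce.simps(2))

lemma reduce_reduce: "reduce (reduce xs) = reduce xs"
  using foldr_reduce[of "[]" xs] reduce_append[of xs "[]"] reduce_append[of "reduce xs" "[]"] by simp

lemma reduce_app_left: "reduce (reduce xs @ ys) = reduce (xs @ ys)"
  by (simp add: reduce_append foldr_reduce reduce_reduced)

lemma reduce_app_right: "reduce (xs @ reduce ys) = reduce (xs @ ys)"
  by (simp add: reduce_append reduce_reduce)

definition eqv :: "'a word \<Rightarrow> 'a word \<Rightarrow> bool" where
  "eqv u v \<longleftrightarrow> reduce u = reduce v"

lemma eqv_refl[simp]: "eqv u u" by (simp add: eqv_def)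
lemma eqv_sym: "eqv u v \<Longrightarrow> eqv v u" by (simp add: eqv_def)
lemma eqv_trans[trans]: "eqv u v \<Longrightarrow> eqv v w \<Longrightarrow> eqv u w" by (simp add: eqv_def)

lemma eqv_app: "eqv u u' \<Longrightarrow> eqv v v' \<Longrightarrow> eqv (u @ v) (u' @ v')"
  unfolding eqv_def by (metis reduce_app_left reduce_app_right)

lemma inv_word_Cons: "inv_word (a # l) = inv_word l @ [(\<not> fst a, snd a)]"
  by (cases a) (simp add: inv_word_def)

lemma inv_word_app[simp]: "inv_word (u @ v) = inv_word v @ inv_word u"
  by (simp add: inv_word_def)

lemma inv_word_inv[simp]: "inv_word (inv_word u) = u"
  by (simp add: inv_word_def case_prod_unfold comp_def rev_map)

lemma inv_word_Nil[simp]: "inv_word [] = []" by (simp add: inv_word_def)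

lemma reduce_inv_right: "reduce (u @ inv_word u) = []"
proof (induction u)
  case (Cons a u)
  have "reduce ((a # u) @ inv_word (a # u)) = reduce ([a] @ (u @ inv_word u) @ [(\<not> fst a, snd a)])"
    by (simp add: inv_word_Cons)
  also have "\<dots> = reduce ([a] @ reduce ((u @ inv_word u) @ [(\<not> fst a, snd a)]))"
    by (simp only: reduce_app_right)
  also have "reduce ((u @ inv_word u) @ [(\<not> fst a, snd a)]) = [(\<not> fst a, snd a)]"
    using reduce_app_left[of "u @ inv_word u" "[(\<not> fst a, snd a)]"] Cons.IH by simp
  finally show ?case by (cases a) simp
qed simp

lemma eqv_inv_right: "eqv (u @ inv_word u) []"
  by (simp add: eqv_def reduce_inv_right)

lemma eqv_inv_left: "eqv (inv_word u @ u) []"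
  using eqv_inv_right[of "inv_word u"] by simp

lemma eqv_inv: "eqv u v \<Longrightarrow> eqv (inv_word u) (inv_word v)"
proof -
  assume e: "eqv u v"
  have "eqv (inv_word u) (inv_word u @ (v @ inv_word v))"
    using eqv_app[OF eqv_refl[of "inv_word u"] eqv_sym[OF eqv_inv_right[of v]]] by simp
  also have "eqv \<dots> ((inv_word u @ u) @ inv_word v)"
    using eqv_app[OF eqv_refl[of "inv_word u"] eqv_app[OF eqv_sym[OF e] eqv_refl]] by simp
  also have "eqv \<dots> ([] @ inv_word v)"
    by (rule eqv_app[OF eqv_inv_left eqv_refl])
  finally show ?thesis by simp
qed


definition img :: "('a \<Rightarrow> 'b word) \<Rightarrow> bool \<times> 'a \<Rightarrow> 'b word" where
  "img s p = (if fst p then s (snd p) else inv_word (s (snd p)))"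

lemma subst_Nil[simp]: "subst s [] = []" by (simp add: subst_def)
lemma subst_Cons[simp]: "subst s (p # w) = img s p @ subst s w"
  by (cases p) (simp add: subst_def img_def)
lemma subst_app[simp]: "subst s (u @ v) = subst s u @ subst s v"
  by (simp add: subst_def)

lemma eqv_subst_cons_red: "eqv (subst s (cons_red p L)) (img s p @ subst s L)"
proof (cases L)
  case (Cons y ys)
  show ?thesis
  proof (cases "cancels p y")
    case True
    obtain b a where p: "p = (b, a)" by (cases p)
    then have y: "y = (\<not> b, a)" using True by (cases y) auto
    have "eqv (img s p @ img s y) []"
      using eqv_inv_right[of "s a"] eqv_inv_left[of "s a"] by (cases b) (auto simp: p y img_def)
    then have "eqv ((img s p @ img s y) @ subst s ys) ([] @ subst s ys)"
      by (rule eqv_app) simp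
    then show ?thesis using Cons True by (simp add: eqv_sym)
  qed (use Cons in simp)
qed simp

lemma eqv_subst_reduce: "eqv (subst s (reduce w)) (subst s w)"
proof (induction w)
  case (Cons p w)
  have "eqv (subst s (reduce (p # w))) (img s p @ subst s (reduce w))"
    by (simp add: reduce_Cons eqv_subst_cons_red del: reduce.simps(2))
  also have "eqv \<dots> (img s p @ subst s w)"
    by (rule eqv_app[OF eqv_refl Cons.IH])
  finally show ?case by simp
qed simp

lemma eqv_subst_cong: "(\<And>a. a \<in> snd ` set w \<Longrightarrow> eqv (s a) (s' a)) \<Longrightarrow> eqv (subst s w) (subst s' w)"
proof (induction w)
  case (Cons p w)
  have "eqv (img s p) (img s' p)"
    using Cons.prems[of "snd p"] by (auto simp: img_def intro: eqv_inv)
  then show ?case using Cons by (auto intro: eqv_app)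
qed simp

definition esum :: "'a \<Rightarrow> 'a word \<Rightarrow> int" where
  "esum j w = sum_list (map (\<lambda>p. if snd p = j then (if fst p then 1 else -1) else 0) w)"

lemma esum_Nil[simp]: "esum j [] = 0" by (simp add: esum_def)
lemma esum_Cons: "esum j (p # w) = (if snd p = j then (if fst p then 1 else -1) else 0) + esum j w"
  by (simp add: esum_def)
lemma esum_app[simp]: "esum j (u @ v) = esum j u + esum j v"
  by (simp add: esum_def)
lemma esum_inv[simp]: "esum j (inv_word u) = - esum j u"
  by (induction u) (auto simp: inv_word_Cons esum_Cons)

lemma esum_cons_red: "esum j (cons_red p L) = esum j (p # L)"
  by (cases L) (auto simp: esum_Cons, (cases p, auto)+)

lemma esum_reduce: "esum j (reduce w) = esum j w"
  by (induction w) (simp_all add: reduce_Cons esum_cons_red esum_Cons del: reduce.simps(2))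

lemma esum_comm_prod: "comm_prod r c \<Longrightarrow> esum j c = 0"
  by (induction rule: comm_prod.induct) (auto simp: commw_def)

lemma words_over_app[simp]: "u @ v \<in> words_over A \<longleftrightarrow> u \<in> words_over A \<and> v \<in> words_over A"
  by (auto simp: words_over_def)
lemma words_over_inv[simp]: "inv_word u \<in> words_over A \<longleftrightarrow> u \<in> words_over A"
  by (auto simp: words_over_def inv_word_def)
lemma words_over_Nil[simp]: "[] \<in> words_over A" by (simp add: words_over_def)
lemma words_over_Cons[simp]: "p # u \<in> words_over A \<longleftrightarrow> snd p \<in> A \<and> u \<in> words_over A"
  by (auto simp: words_over_def)

lemma set_cons_red: "set (cons_red p L) \<subseteq> insert p (set L)"
  by (cases L) auto
lemma set_reduce: "set (reduce w) \<subseteq> set w"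
proof (induction w)
  case (Cons p w)
  have "set (reduce (p # w)) \<subseteq> insert p (set (reduce w))"
    using set_cons_red by (simp add: reduce_Cons del: reduce.simps(2))
  then show ?case using Cons.IH by auto
qed simp
lemma words_over_reduce: "w \<in> words_over A \<Longrightarrow> reduce w \<in> words_over A"
  using set_reduce by (fastforce simp: words_over_def)

lemma words_over_subst: "(\<And>a. a \<in> snd ` set w \<Longrightarrow> s a \<in> words_over B) \<Longrightarrow> subst s w \<in> words_over B"
  by (induction w) (auto simp: img_def)


definition Dk :: "nat \<Rightarrow> nat \<Rightarrow> nat \<Rightarrow> (nat \<times> nat) word \<Rightarrow> bool" where
  "Dk n r k u \<longleftrightarrow> (\<exists>cs. length cs \<le> k \<and> (\<forall>c \<in> set cs. conj_rel n r c) \<and> eqv u (concat cs))"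

lemma Dk_eqv: "Dk n r k u \<Longrightarrow> eqv u v \<Longrightarrow> Dk n r k v"
  unfolding Dk_def by (meson eqv_sym eqv_trans)

lemma Dk_mono: "Dk n r k u \<Longrightarrow> k \<le> m \<Longrightarrow> Dk n r m u"
  unfolding Dk_def by (meson order_trans)

lemma Dk_nil: "Dk n r 0 []"
  unfolding Dk_def by (rule exI[of _ "[]"]) simp

lemma Dk_app: "Dk n r k u \<Longrightarrow> Dk n r m v \<Longrightarrow> Dk n r (k + m) (u @ v)"
proof -
  assume "Dk n r k u" "Dk n r m v"
  then obtain cs ds where "length cs \<le> k" "\<forall>c \<in> set cs. conj_rel n r c" "eqv u (concat cs)"
    "length ds \<le> m" "\<forall>c \<in> set ds. conj_rel n r c" "eqv v (concat ds)"
    unfolding Dk_def by blast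
  then show ?thesis unfolding Dk_def
    by (intro exI[of _ "cs @ ds"]) (auto intro: eqv_app)
qed

lemma conj_concat: "eqv (g @ concat cs @ inv_word g) (concat (map (\<lambda>c. g @ c @ inv_word g) cs))"
proof (induction cs)
  case Nil then show ?case using eqv_inv_right[of g] by simp
next
  case (Cons c cs)
  have "eqv (g @ concat (c # cs) @ inv_word g) ((g @ c) @ [] @ (concat cs @ inv_word g))" by simp
  also have "eqv \<dots> ((g @ c) @ (inv_word g @ g) @ (concat cs @ inv_word g))"
    by (intro eqv_app eqv_refl eqv_sym[OF eqv_inv_left])
  also have "eqv \<dots> ((g @ c @ inv_word g) @ (g @ concat cs @ inv_word g))" by simp
  also have "eqv \<dots> ((g @ c @ inv_word g) @ concat (map (\<lambda>c. g @ c @ inv_word g) cs))"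
    by (intro eqv_app eqv_refl Cons.IH)
  finally show ?case by simp
qed

lemma Dk_conj: "g \<in> words_over (Xset n r) \<Longrightarrow> Dk n r k u \<Longrightarrow> Dk n r k (g @ u @ inv_word g)"
proof -
  assume g: "g \<in> words_over (Xset n r)" and "Dk n r k u"
  then obtain cs where cs: "length cs \<le> k" "\<forall>c \<in> set cs. conj_rel n r c" "eqv u (concat cs)"
    unfolding Dk_def by blast
  have "\<forall>c \<in> set (map (\<lambda>c. g @ c @ inv_word g) cs). conj_rel n r c"
  proof
    fix c' assume "c' \<in> set (map (\<lambda>c. g @ c @ inv_word g) cs)"
    then obtain c where c: "c \<in> set cs" "c' = g @ c @ inv_word g" by auto
    then obtain h \<rho> where "h \<in> words_over (Xset n r)" "\<rho> \<in> Rel n r \<or> inv_word \<rho> \<in> Rel n r"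
      "c = h @ \<rho> @ inv_word h" using cs(2) unfolding conj_rel_def by blast
    then show "conj_rel n r c'" unfolding conj_rel_def using g c
      by (intro exI[of _ "g @ h"] exI[of _ \<rho>]) simp
  qed
  moreover have "eqv (g @ u @ inv_word g) (concat (map (\<lambda>c. g @ c @ inv_word g) cs))"
    using eqv_trans[OF eqv_app[OF eqv_refl eqv_app[OF cs(3) eqv_refl]] conj_concat] .
  ultimately show ?thesis unfolding Dk_def using cs(1)
    by (intro exI[of _ "map (\<lambda>c. g @ c @ inv_word g) cs"]) simp
qed

lemma inv_concat: "inv_word (concat cs) = concat (rev (map inv_word cs))"
  by (induction cs) auto

lemma Dk_inv: "Dk n r k u \<Longrightarrow> Dk n r k (inv_word u)"
proof -
  assume "Dk n r k u"
  then obtain cs where cs: "length cs \<le> k" "\<forall>c \<in> set cs. conj_rel n r c" "eqv u (concat cs)"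
    unfolding Dk_def by blast
  have "\<forall>c \<in> set (rev (map inv_word cs)). conj_rel n r c"
  proof
    fix c' assume "c' \<in> set (rev (map inv_word cs))"
    then obtain c where c: "c \<in> set cs" "c' = inv_word c" by auto
    then obtain h \<rho> where "h \<in> words_over (Xset n r)" "\<rho> \<in> Rel n r \<or> inv_word \<rho> \<in> Rel n r"
      "c = h @ \<rho> @ inv_word h" using cs(2) unfolding conj_rel_def by blast
    then show "conj_rel n r c'" unfolding conj_rel_def using c
      by (intro exI[of _ h] exI[of _ "inv_word \<rho>"]) auto
  qed
  then show ?thesis unfolding Dk_def using cs
    by (intro exI[of _ "rev (map inv_word cs)"]) (auto simp: inv_concat[symmetric] intro: eqv_inv)
qed

lemma Dk_rel: "\<rho> \<in> Rel n r \<Longrightarrow> Dk n r 1 \<rho>"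
proof -
  assume a: "\<rho> \<in> Rel n r"
  have "conj_rel n r \<rho>" unfolding conj_rel_def using a
    by (intro exI[of _ "[]"] exI[of _ \<rho>]) simp
  then show ?thesis unfolding Dk_def by (intro exI[of _ "[\<rho>]"]) simp
qed

definition Eq :: "nat \<Rightarrow> nat \<Rightarrow> nat \<Rightarrow> (nat \<times> nat) word \<Rightarrow> (nat \<times> nat) word \<Rightarrow> bool" where
  "Eq n r k u v \<longleftrightarrow> Dk n r k (u @ inv_word v)"

lemma Eq_eqv: "eqv u v \<Longrightarrow> Eq n r 0 u v"
  unfolding Eq_def
  by (rule Dk_eqv[OF Dk_nil]) (metis eqv_app eqv_inv_right eqv_refl eqv_sym eqv_trans)

lemma Eq_trans: "Eq n r k u v \<Longrightarrow> Eq n r m v w \<Longrightarrow> Eq n r (k + m) u w"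
proof -
  assume "Eq n r k u v" "Eq n r m v w"
  then have "Dk n r (k + m) ((u @ inv_word v) @ (v @ inv_word w))"
    unfolding Eq_def by (rule Dk_app)
  moreover have "eqv ((u @ inv_word v) @ (v @ inv_word w)) (u @ (inv_word v @ v) @ inv_word w)" by simp
  moreover have "eqv (u @ (inv_word v @ v) @ inv_word w) (u @ [] @ inv_word w)"
    by (intro eqv_app eqv_refl eqv_inv_left)
  ultimately show ?thesis unfolding Eq_def by (simp add: Dk_eqv eqv_trans)
qed

lemma Eq_sym: "Eq n r k u v \<Longrightarrow> Eq n r k v u"
  unfolding Eq_def using Dk_inv by fastforce

lemma Eq_ctx: "a \<in> words_over (Xset n r) \<Longrightarrow> Eq n r k u v \<Longrightarrow> Eq n r k (a @ u @ b) (a @ v @ b)"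
proof -
  assume a: "a \<in> words_over (Xset n r)" "Eq n r k u v"
  then have "Dk n r k (a @ (u @ inv_word v) @ inv_word a)" unfolding Eq_def by (rule Dk_conj)
  moreover have "eqv (a @ u @ (b @ inv_word b) @ (inv_word v @ inv_word a)) (a @ u @ [] @ (inv_word v @ inv_word a))"
    by (intro eqv_app eqv_refl eqv_inv_right)
  ultimately show ?thesis unfolding Eq_def using Dk_eqv eqv_sym by fastforce
qed

lemma Eq_mono: "Eq n r k u v \<Longrightarrow> k \<le> m \<Longrightarrow> Eq n r m u v"
  unfolding Eq_def by (rule Dk_mono)


lemma eqv_cancel: "eqv (a @ g @ inv_word g @ b) (a @ b)"
  using eqv_app[OF eqv_refl[of a] eqv_app[OF eqv_inv_right[of g] eqv_refl[of b]]] by simp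

lemma eqv_cancel': "eqv (a @ inv_word g @ g @ b) (a @ b)"
  using eqv_cancel[of a "inv_word g" b] by simp

lemma Cm_app:
  assumes u: "u \<in> words_over (Xset n r)"
    and "Dk n r k1 (commw u d)" "Dk n r k2 (commw v d)"
  shows "Dk n r (k1 + k2) (commw (u @ v) d)"
proof -
  have "Dk n r k2 (u @ commw v d @ inv_word u)" using Dk_conj[OF u assms(3)] .
  then have "Dk n r (k2 + k1) ((u @ commw v d @ inv_word u) @ commw u d)"
    using assms(2) by (rule Dk_app)
  moreover have "eqv ((u @ commw v d @ inv_word u) @ commw u d)
      ((u @ v @ d @ inv_word v @ inv_word d) @ d @ inv_word u @ inv_word d)"
    using eqv_cancel'[of "u @ v @ d @ inv_word v @ inv_word d" u "d @ inv_word u @ inv_word d"]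
    by (simp add: commw_def)
  moreover have "eqv ((u @ v @ d @ inv_word v) @ inv_word d @ d @ inv_word u @ inv_word d)
      ((u @ v @ d @ inv_word v) @ inv_word u @ inv_word d)"
    by (rule eqv_cancel')
  ultimately show ?thesis
    by (simp add: commw_def add.commute) (meson Dk_eqv eqv_trans)
qed

lemma Cm_inv:
  assumes u: "u \<in> words_over (Xset n r)" and "Dk n r k (commw u d)"
  shows "Dk n r k (commw (inv_word u) d)"
proof -
  have "Dk n r k (inv_word u @ inv_word (commw u d) @ inv_word (inv_word u))"
    using Dk_conj[OF _ Dk_inv[OF assms(2)], of "inv_word u"] u by simp
  moreover have "eqv ([] @ inv_word u @ d @ u @ inv_word d @ inv_word u @ u) ([] @ inv_word u @ d @ u @ inv_word d)"
    using eqv_cancel'[of "inv_word u @ d @ u @ inv_word d" u "[]"] by simp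
  ultimately show ?thesis by (simp add: commw_def) (meson Dk_eqv)
qed

lemma Cm_invd:
  assumes d: "d \<in> words_over (Xset n r)" and "Dk n r k (commw u d)"
  shows "Dk n r k (commw u (inv_word d))"
proof -
  have "Dk n r k (inv_word d @ inv_word (commw u d) @ inv_word (inv_word d))"
    using Dk_conj[OF _ Dk_inv[OF assms(2)], of "inv_word d"] d by simp
  moreover have "eqv ([] @ inv_word d @ d @ (u @ inv_word d @ inv_word u @ d)) ([] @ (u @ inv_word d @ inv_word u @ d))"
    by (rule eqv_cancel')
  ultimately show ?thesis by (simp add: commw_def) (meson Dk_eqv)
qed

lemma Cm_nil: "Dk n r 0 (commw [] d)"
  using Dk_eqv[OF Dk_nil, of "commw [] d"] eqv_inv_right[of d] by (simp add: commw_def eqv_sym)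

lemma Cm_subst:
  assumes cm: "\<And>i. i \<in> {1..r} \<Longrightarrow> Dk n r c (commw (s i) d)"
    and sX: "\<And>i. i \<in> {1..r} \<Longrightarrow> s i \<in> words_over (Xset n r)"
  shows "w \<in> words_over {1..r} \<Longrightarrow> Dk n r (c * length w) (commw (subst s w) d)"
proof (induction w)
  case Nil then show ?case using Cm_nil by simp
next
  case (Cons p w)
  have i: "snd p \<in> {1..r}" using Cons.prems by simp
  have X: "img s p \<in> words_over (Xset n r)" using sX[OF i] by (simp add: img_def)
  have "Dk n r c (commw (img s p) d)"
    using cm[OF i] Cm_inv[OF sX[OF i] cm[OF i]] by (simp add: img_def)
  then have "Dk n r (c + c * length w) (commw (img s p @ subst s w) d)"
    using Cm_app[OF X] Cons by simp
  then show ?case by simp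
qed

lemma Cm_Eq: "Dk n r k (commw u d) \<Longrightarrow> Eq n r k (d @ u) (u @ d)"
  unfolding Eq_def by (rule Eq_sym[unfolded Eq_def]) (simp add: commw_def)

definition dpow :: "'a word \<Rightarrow> int \<Rightarrow> 'a word" where
  "dpow d e = (if e \<ge> 0 then concat (replicate (nat e) d) else concat (replicate (nat (- e)) (inv_word d)))"

lemma dpow_0[simp]: "dpow d 0 = []" by (simp add: dpow_def)

lemma dpow_Suc: "eqv (d @ dpow d e) (dpow d (e + 1))"
proof (cases "e \<ge> 0")
  case True
  then have "nat (e + 1) = Suc (nat e)" by simp
  then show ?thesis using True by (simp add: dpow_def)
next
  case False
  then obtain m where m: "nat (- e) = Suc m" by (cases "nat (- e)") auto
  have "eqv (d @ inv_word d @ concat (replicate m (inv_word d))) (concat (replicate m (inv_word d)))"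
    using eqv_cancel[of "[]" d] by simp
  moreover have "nat (- e - 1) = m" using m by arith
  moreover have "dpow d (e + 1) = concat (replicate m (inv_word d))"
    using False m calculation(2) by (auto simp: dpow_def)
  ultimately show ?thesis using False m by (simp add: dpow_def)
qed

lemma dpow_Pred: "eqv (inv_word d @ dpow d e) (dpow d (e - 1))"
proof (cases "e > 0")
  case False
  then have "nat (- (e - 1)) = Suc (nat (- e))" by simp
  then show ?thesis using False by (auto simp: dpow_def)
next
  case True
  then obtain m where m: "nat e = Suc m" by (cases "nat e") auto
  have "eqv (inv_word d @ d @ concat (replicate m d)) (concat (replicate m d))"
    using eqv_cancel'[of "[]" d] by simp
  moreover have "nat (e - 1) = m" using m by arith
  moreover have "dpow d (e - 1) = concat (replicate m d)"
    using True m calculation(2) by (auto simp: dpow_def)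
  ultimately show ?thesis using True m by (simp add: dpow_def)
qed


lemma step_ind:
  assumes cm: "\<And>i. i \<in> {1..r} \<Longrightarrow> Dk n r 1 (commw (s i) d)"
    and sX: "\<And>i. i \<in> {1..r} \<Longrightarrow> s i \<in> words_over (Xset n r)"
    and dX: "d \<in> words_over (Xset n r)"
    and j: "j \<in> {1..r}"
  shows "w \<in> words_over {1..r} \<Longrightarrow>
    Eq n r (length w * length w) (subst (s(j := d @ s j)) w) (subst s w @ dpow d (esum j w))"
proof (induction w)
  case Nil
  then show ?case using Eq_eqv[of "[]" "[]"] by simp
next
  case (Cons p w)
  define s' where "s' = s(j := d @ s j)"
  have s'j: "s' j = d @ s j" and s'o: "\<And>a. a \<noteq> j \<Longrightarrow> s' a = s a" by (simp_all add: s'_def)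
  define L where "L = length w"
  define T where "T = subst s' w"
  define S where "S = subst s w"
  define P where "P = dpow d (esum j w)"
  obtain b i where p: "p = (b, i)" by (cases p)
  have i: "i \<in> {1..r}" and w: "w \<in> words_over {1..r}" using Cons.prems p by auto
  have IH: "Eq n r (L * L) T (S @ P)" using Cons.IH[OF w] unfolding L_def T_def S_def P_def s'_def .
  have SX: "S \<in> words_over (Xset n r)" unfolding S_def using w sX
    by (intro words_over_subst) (auto simp: words_over_def)
  have bound1: "L * L + Suc L + 0 \<le> Suc L * Suc L" by simp
  have bound2: "L * L + L + 0 \<le> Suc L * Suc L" by simp
  have main: "Eq n r (length (p # w) * length (p # w)) (subst s' (p # w)) (subst s (p # w) @ dpow d (esum j (p # w)))"
  proof (cases "i = j")
    case False
    have "img s' p = img s p" using False p s'o by (simp add: img_def)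
    moreover have "esum j (p # w) = esum j w" using False p by (simp add: esum_Cons)
    moreover have "img s p \<in> words_over (Xset n r)" using sX[OF i] p by (simp add: img_def)
    ultimately show ?thesis using Eq_ctx[OF _ IH, of "img s p" "[]"]
      by (simp add: T_def S_def P_def L_def) (erule Eq_mono, simp)
  next
    case True
    show ?thesis
    proof (cases b)
      case True
      have e: "esum j (p # w) = esum j w + 1" using \<open>i = j\<close> True p by (simp add: esum_Cons)
      have E1: "Eq n r (L * L) (d @ s j @ T) (d @ s j @ S @ P)"
        using Eq_ctx[OF _ IH, of "d @ s j" "[]"] dX sX[OF j] by simp
      have "Dk n r (1 * length (p # w)) (commw (subst s (p # w)) d)"
        by (rule Cm_subst[OF cm sX Cons.prems])
      then have "Dk n r (Suc L) (commw (s j @ S) d)"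
        using True \<open>i = j\<close> p by (simp add: img_def S_def L_def)
      then have "Eq n r (Suc L) (d @ (s j @ S)) ((s j @ S) @ d)" by (rule Cm_Eq)
      then have E2: "Eq n r (Suc L) (d @ s j @ S @ P) (s j @ S @ d @ P)"
        using Eq_ctx[of "[]" n r "Suc L" "d @ s j @ S" "s j @ S @ d" P] by simp
      have E3: "Eq n r 0 (s j @ S @ d @ P) (s j @ S @ dpow d (esum j w + 1))"
        unfolding P_def by (intro Eq_eqv eqv_app eqv_refl dpow_Suc)
      have "Eq n r (L * L + Suc L + 0) (d @ s j @ T) (s j @ S @ dpow d (esum j w + 1))"
        using Eq_trans[OF Eq_trans[OF E1 E2] E3] by simp
      then show ?thesis using True \<open>i = j\<close> p e s'j
        by (simp add: img_def T_def S_def L_def) (erule Eq_mono, simp)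
    next
      case False
      have e: "esum j (p # w) = esum j w - 1" using \<open>i = j\<close> False p by (simp add: esum_Cons)
      have E1: "Eq n r (L * L) (inv_word (s j) @ inv_word d @ T) (inv_word (s j) @ inv_word d @ S @ P)"
        using Eq_ctx[OF _ IH, of "inv_word (s j) @ inv_word d" "[]"] dX sX[OF j] by simp
      have "Dk n r (1 * length w) (commw S d)"
        unfolding S_def by (rule Cm_subst[OF cm sX w])
      then have "Dk n r L (commw S (inv_word d))"
        using Cm_invd[OF dX] by (simp add: L_def)
      then have "Eq n r L (inv_word d @ S) (S @ inv_word d)" by (rule Cm_Eq)
      then have E2: "Eq n r L (inv_word (s j) @ inv_word d @ S @ P) (inv_word (s j) @ S @ inv_word d @ P)"
        using sX[OF j] Eq_ctx[of "inv_word (s j)" n r L "inv_word d @ S" "S @ inv_word d" P] by simp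
      have E3: "Eq n r 0 (inv_word (s j) @ S @ inv_word d @ P) (inv_word (s j) @ S @ dpow d (esum j w - 1))"
        unfolding P_def by (intro Eq_eqv eqv_app eqv_refl dpow_Pred)
      have "Eq n r (L * L + L + 0) (inv_word (s j) @ inv_word d @ T) (inv_word (s j) @ S @ dpow d (esum j w - 1))"
        using Eq_trans[OF Eq_trans[OF E1 E2] E3] by simp
      then show ?thesis using False \<open>i = j\<close> p e s'j
        by (simp add: img_def T_def S_def L_def) (erule Eq_mono, simp)
    qed
  qed
  then show ?case unfolding s'_def .
qed


lemma subst_cong_eq: "(\<And>a. a \<in> snd ` set w \<Longrightarrow> s a = s' a) \<Longrightarrow> subst s w = subst s' w"
  by (induction w) (auto simp: img_def)

lemma x_X: "\<alpha> \<in> {1..n-1} \<Longrightarrow> i \<in> {1..r} \<Longrightarrow> x \<alpha> i \<in> words_over (Xset n r)"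
  by (simp add: x_def gen_def Xset_def)

lemma comm_esum: "w \<in> commutator_subgroup r \<Longrightarrow> esum j (reduce w) = 0"
proof -
  assume "w \<in> commutator_subgroup r"
  then obtain c where "comm_prod r c" "reduce w = reduce c" unfolding commutator_subgroup_def by blast
  then show ?thesis by (simp add: esum_reduce esum_comm_prod)
qed

lemma move:
  assumes inj: "inj_on \<tau> {1..r}" and rng: "\<tau> ` {1..r} \<subseteq> {1..n-1}"
    and j: "j \<in> {1..r}" and \<beta>: "\<beta> \<in> {1..n-1}" "\<beta> \<notin> \<tau> ` {1..r}"
    and w: "w \<in> commutator_subgroup r"
  shows "Eq n r (word_length w * word_length w)
           (subst (\<lambda>i. x ((\<tau>(j := \<beta>)) i) i) w) (subst (\<lambda>i. x (\<tau> i) i) w)"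
proof -
  define s where "s = (\<lambda>i. x (\<tau> i) i)"
  define \<alpha> where "\<alpha> = \<tau> j"
  define d where "d = x \<beta> j @ inv_word (x \<alpha> j)"
  have \<alpha>: "\<alpha> \<in> {1..n-1}" using rng j unfolding \<alpha>_def by blast
  have \<alpha>\<beta>: "\<alpha> \<noteq> \<beta>" using \<beta> j by (auto simp: \<alpha>_def)
  have sX: "\<And>i. i \<in> {1..r} \<Longrightarrow> s i \<in> words_over (Xset n r)"
  proof -
    fix i assume i: "i \<in> {1..r}"
    have "\<tau> i \<in> {1..n-1}" using rng i by blast
    then show "s i \<in> words_over (Xset n r)" unfolding s_def using i by (rule x_X)
  qed
  have dX: "d \<in> words_over (Xset n r)" unfolding d_def using x_X[OF \<alpha> j] x_X[OF \<beta>(1) j] by simp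
  have cm: "Dk n r 1 (commw (s i) d)" if i: "i \<in> {1..r}" for i
  proof (cases "i = j")
    case True
    have "commw (x \<alpha> j) (x \<beta> j) \<in> R1 n r"
      unfolding R1_def mem_Collect_eq using \<alpha> \<beta> j \<alpha>\<beta>
      by (intro exI[of _ \<alpha>] exI[of _ \<beta>] exI[of _ j]) simp
    then have "commw (x \<alpha> j) (x \<beta> j) \<in> Rel n r" by (simp add: Rel_def)
    moreover have "eqv (commw (x \<alpha> j) (x \<beta> j)) (commw (s i) d)"
      using True \<alpha>\<beta> by (simp add: s_def d_def \<alpha>_def[symmetric] eqv_def commw_def x_def gen_def inv_word_def)
    ultimately show ?thesis using Dk_rel Dk_eqv by blast
  next
    case False
    have ne1: "\<tau> i \<noteq> \<beta>" using \<beta>(2) i by blast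
    have ne2: "\<tau> i \<noteq> \<alpha>" using inj i j False unfolding \<alpha>_def inj_on_def by blast
    have "\<tau> i \<in> {1..n-1}" using rng i by blast
    then have "commw (s i) d \<in> R2 n r"
      unfolding R2_def s_def d_def mem_Collect_eq using \<alpha> \<beta> j i False ne1 ne2 \<alpha>\<beta>
      by (intro exI[of _ "\<tau> i"] exI[of _ \<beta>] exI[of _ \<alpha>] exI[of _ i] exI[of _ j] conjI refl) (assumption | rule not_sym, assumption)+
    then have "commw (s i) d \<in> Rel n r" by (simp add: Rel_def)
    then show ?thesis by (rule Dk_rel)
  qed
  define rw where "rw = reduce w"
  have rwo: "rw \<in> words_over {1..r}"
    using w unfolding rw_def commutator_subgroup_def by (auto intro: words_over_reduce)
  have E: "Eq n r (length rw * length rw) (subst (s(j := d @ s j)) rw) (subst s rw @ dpow d (esum j rw))"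
    by (rule step_ind[OF cm sX dX j rwo])
  have "esum j rw = 0" using comm_esum[OF w] by (simp add: rw_def)
  then have E': "Eq n r (length rw * length rw) (subst (s(j := d @ s j)) rw) (subst s rw)"
    using E by simp
  have wo: "w \<in> words_over {1..r}" using w by (simp add: commutator_subgroup_def)
  have c1: "eqv (subst (\<lambda>i. x ((\<tau>(j := \<beta>)) i) i) w) (subst (s(j := d @ s j)) w)"
  proof (rule eqv_subst_cong)
    fix a assume "a \<in> snd ` set w"
    show "eqv (x ((\<tau>(j := \<beta>)) a) a) ((s(j := d @ s j)) a)"
    proof (cases "a = j")
      case True
      have "eqv (x \<beta> j @ inv_word (x \<alpha> j) @ x \<alpha> j @ []) (x \<beta> j @ [])" by (rule eqv_cancel')
      then show ?thesis using True by (simp add: s_def d_def \<alpha>_def eqv_sym)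
    qed (simp add: s_def)
  qed
  have c2: "eqv (subst (s(j := d @ s j)) w) (subst (s(j := d @ s j)) rw)"
    unfolding rw_def by (rule eqv_sym[OF eqv_subst_reduce])
  have c3: "eqv (subst s rw) (subst s w)"
    unfolding rw_def by (rule eqv_subst_reduce)
  have "Eq n r (0 + 0 + length rw * length rw + 0) (subst (\<lambda>i. x ((\<tau>(j := \<beta>)) i) i) w) (subst s w)"
    by (rule Eq_trans[OF Eq_trans[OF Eq_trans[OF Eq_eqv[OF c1] Eq_eqv[OF c2]] E'] Eq_eqv[OF c3]])
  then show ?thesis by (simp add: word_length_def rw_def s_def)
qed


lemma free_value:
  fixes n r :: nat and \<tau> :: "nat \<Rightarrow> nat"
  assumes "r + 2 \<le> n"
  obtains \<beta> where "\<beta> \<in> {1..n-1}" "\<beta> \<notin> \<tau> ` {1..r}"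
proof -
  have "\<not> {1..n-1} \<subseteq> \<tau> ` {1..r}"
  proof
    assume "{1..n-1} \<subseteq> \<tau> ` {1..r}"
    then have "card {1..n-1} \<le> card (\<tau> ` {1..r})" using card_mono[of "\<tau> ` {1..r}" "{1..n-1}"] by simp
    also have "\<dots> \<le> card {1..r}" by (rule card_image_le) simp
    finally show False using assms by simp
  qed
  then show ?thesis using that by blast
qed

lemma chain:
  assumes n: "r + 2 \<le> n" and \<sigma>: "inj_on \<sigma> {1..r}" "\<sigma> ` {1..r} \<subseteq> {1..n-1}"
    and w: "w \<in> commutator_subgroup r"
  shows "inj_on \<tau> {1..r} \<Longrightarrow> \<tau> ` {1..r} \<subseteq> {1..n-1} \<Longrightarrow> card {i \<in> {1..r}. \<tau> i \<noteq> \<sigma> i} \<le> N \<Longrightarrow>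
    Eq n r (2 * N * (word_length w * word_length w)) (subst (\<lambda>i. x (\<tau> i) i) w) (subst (\<lambda>i. x (\<sigma> i) i) w)"
proof (induction N arbitrary: \<tau>)
  case 0
  have "finite {i \<in> {1..r}. \<tau> i \<noteq> \<sigma> i}" by simp
  then have "{i \<in> {1..r}. \<tau> i \<noteq> \<sigma> i} = {}" using 0 by simp
  then have eqs: "\<forall>i \<in> {1..r}. \<tau> i = \<sigma> i" by blast
  have sw: "snd ` set w \<subseteq> {1..r}" using w by (auto simp: commutator_subgroup_def words_over_def)
  have "subst (\<lambda>i. x (\<tau> i) i) w = subst (\<lambda>i. x (\<sigma> i) i) w"
  proof (rule subst_cong_eq)
    fix a assume "a \<in> snd ` set w"
    then have "a \<in> {1..r}" using sw by blast
    then show "x (\<tau> a) a = x (\<sigma> a) a" using eqs by simp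
  qed
  then show ?case using Eq_eqv[OF eqv_refl] by simp
next
  case (Suc N)
  define L where "L = word_length w"
  define Dis where "Dis = (\<lambda>\<tau>. {i \<in> {1..r}. \<tau> i \<noteq> \<sigma> i})"
  have finD: "finite (Dis t)" for t unfolding Dis_def by simp
  show ?case
  proof (cases "card (Dis \<tau>) \<le> N")
    case True
    then show ?thesis using Suc.IH[OF Suc.prems(1,2)] unfolding Dis_def
      by (auto elim: Eq_mono)
  next
    case False
    then have "Dis \<tau> \<noteq> {}" by auto
    then obtain j where j: "j \<in> {1..r}" "\<tau> j \<noteq> \<sigma> j" unfolding Dis_def by blast
    have cardD: "card (Dis \<tau> - {j}) \<le> N"
      using Suc.prems(3) j finD[of \<tau>] unfolding Dis_def by (simp add: card_Diff_singleton)
    have \<sigma>j: "\<sigma> j \<in> {1..n-1}" using \<sigma>(2) j by blast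
    show ?thesis
    proof (cases "\<sigma> j \<in> \<tau> ` {1..r}")
      case False
      define \<tau>1 where "\<tau>1 = \<tau>(j := \<sigma> j)"
      have inj1: "inj_on \<tau>1 {1..r}" unfolding \<tau>1_def
        using Suc.prems(1) False by (rule inj_on_fun_updI)
      have rng1: "\<tau>1 ` {1..r} \<subseteq> {1..n-1}" unfolding \<tau>1_def using Suc.prems(2) \<sigma>j by auto
      have "Dis \<tau>1 \<subseteq> Dis \<tau> - {j}" unfolding Dis_def \<tau>1_def by auto
      then have "card (Dis \<tau>1) \<le> N" using cardD finD by (meson card_mono order_trans finite_Diff)
      then have E2: "Eq n r (2 * N * (L * L)) (subst (\<lambda>i. x (\<tau>1 i) i) w) (subst (\<lambda>i. x (\<sigma> i) i) w)"
        using Suc.IH[OF inj1 rng1] unfolding Dis_def L_def by simp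
      have E1: "Eq n r (L * L) (subst (\<lambda>i. x (\<tau> i) i) w) (subst (\<lambda>i. x (\<tau>1 i) i) w)"
        unfolding \<tau>1_def L_def by (rule Eq_sym[OF move[OF Suc.prems(1,2) j(1) \<sigma>j False w]])
      show ?thesis using Eq_trans[OF E1 E2] unfolding L_def
        by (rule Eq_mono) simp
    next
      case True
      then obtain k where k: "k \<in> {1..r}" "\<tau> k = \<sigma> j" by auto
      have kj: "k \<noteq> j" using k j by auto
      obtain \<beta> where \<beta>: "\<beta> \<in> {1..n-1}" "\<beta> \<notin> \<tau> ` {1..r}" using free_value[OF n] by blast
      define \<tau>1 where "\<tau>1 = \<tau>(k := \<beta>)"
      define \<tau>2 where "\<tau>2 = \<tau>1(j := \<sigma> j)"
      have inj1: "inj_on \<tau>1 {1..r}" unfolding \<tau>1_def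
        using Suc.prems(1) \<beta>(2) by (rule inj_on_fun_updI)
      have rng1: "\<tau>1 ` {1..r} \<subseteq> {1..n-1}" unfolding \<tau>1_def using Suc.prems(2) \<beta>(1) by auto
      have nin: "\<sigma> j \<notin> \<tau>1 ` {1..r}"
      proof
        assume "\<sigma> j \<in> \<tau>1 ` {1..r}"
        then obtain i where i: "i \<in> {1..r}" "\<sigma> j = \<tau>1 i" by auto
        show False
        proof (cases "i = k")
          case True
          then have "\<beta> = \<sigma> j" using i by (simp add: \<tau>1_def)
          then show False using k \<beta>(2) by (metis image_eqI)
        next
          case False
          then have "\<tau> i = \<tau> k" using i k by (simp add: \<tau>1_def)
          then show False using inj_onD[OF Suc.prems(1) _ i(1) k(1)] False by blast
        qed
      qed
      have inj2: "inj_on \<tau>2 {1..r}" unfolding \<tau>2_def using inj1 nin by (rule inj_on_fun_updI)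
      have rng2: "\<tau>2 ` {1..r} \<subseteq> {1..n-1}" unfolding \<tau>2_def using rng1 \<sigma>j by auto
      have "\<sigma> k \<noteq> \<sigma> j" using inj_onD[OF \<sigma>(1) _ k(1) j(1)] kj by blast
      then have "Dis \<tau>2 \<subseteq> Dis \<tau> - {j}" unfolding Dis_def \<tau>2_def \<tau>1_def using k kj by auto
      then have "card (Dis \<tau>2) \<le> N" using cardD finD by (meson card_mono order_trans finite_Diff)
      then have E3: "Eq n r (2 * N * (L * L)) (subst (\<lambda>i. x (\<tau>2 i) i) w) (subst (\<lambda>i. x (\<sigma> i) i) w)"
        using Suc.IH[OF inj2 rng2] unfolding Dis_def L_def by simp
      have E1: "Eq n r (L * L) (subst (\<lambda>i. x (\<tau> i) i) w) (subst (\<lambda>i. x (\<tau>1 i) i) w)"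
        unfolding \<tau>1_def L_def by (rule Eq_sym[OF move[OF Suc.prems(1,2) k(1) \<beta> w]])
      have E2: "Eq n r (L * L) (subst (\<lambda>i. x (\<tau>1 i) i) w) (subst (\<lambda>i. x (\<tau>2 i) i) w)"
        unfolding \<tau>2_def L_def by (rule Eq_sym[OF move[OF inj1 rng1 j(1) \<sigma>j nin w]])
      show ?thesis using Eq_trans[OF Eq_trans[OF E1 E2] E3] unfolding L_def
        by (rule Eq_mono) simp
    qed
  qed
qed

lemma Area_le: "Dk n r k u \<Longrightarrow> Area n r u \<le> ereal (real k)"
proof -
  assume "Dk n r k u"
  then obtain cs where cs: "length cs \<le> k" "\<forall>c \<in> set cs. conj_rel n r c" "eqv u (concat cs)"
    unfolding Dk_def by blast
  then have "ereal (real (length cs)) \<in> {ereal (real (length cs)) | cs.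
      (\<forall>c \<in> set cs. conj_rel n r c) \<and> reduce u = reduce (concat cs)}"
    by (auto simp: eqv_def)
  then have "Area n r u \<le> ereal (real (length cs))" unfolding Area_def by (rule Inf_lower)
  also have "\<dots> \<le> ereal (real k)" using cs(1) by simp
  finally show ?thesis .
qed

theorem lemma3p12:
  fixes n r :: nat and \<sigma> :: "nat \<Rightarrow> nat"
  assumes "2 \<le> r + 2" and "r + 2 \<le> n"
    and "inj_on \<sigma> {1..r}" and "\<sigma> ` {1..r} \<subseteq> {1..n-1}"
  shows "\<exists>C > (0::real). \<forall>w \<in> commutator_subgroup r.
    Area n r (subst (\<lambda>i. x i i) w @ inv_word (subst (\<lambda>i. x (\<sigma> i) i) w))
      \<le> ereal (C * real (word_length w) ^ 2)"
proof (intro exI[of _ "2 * real r + 1"] conjI ballI)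
  show "0 < 2 * real r + 1" by simp
next
  fix w assume w: "w \<in> commutator_subgroup r"
  define L where "L = word_length w"
  have "card {i \<in> {1..r}. i \<noteq> \<sigma> i} \<le> card {1..r}" by (intro card_mono) auto
  then have "card {i \<in> {1..r}. (\<lambda>i. i) i \<noteq> \<sigma> i} \<le> r" by simp
  moreover have "(\<lambda>i. i) ` {1..r} \<subseteq> {1..n-1}" using assms(2) by auto
  ultimately have "Eq n r (2 * r * (L * L)) (subst (\<lambda>i. x ((\<lambda>i. i) i) i) w) (subst (\<lambda>i. x (\<sigma> i) i) w)"
    using chain[OF assms(2,3,4) w, of "\<lambda>i. i" r] unfolding L_def by simp
  then have "Area n r (subst (\<lambda>i. x i i) w @ inv_word (subst (\<lambda>i. x (\<sigma> i) i) w)) \<le> ereal (real (2 * r * (L * L)))"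
    unfolding Eq_def by (rule Area_le)
  also have "\<dots> \<le> ereal ((2 * real r + 1) * real L ^ 2)"
    by (simp add: power2_eq_square algebra_simps mult_nonneg_nonneg)
  finally show "Area n r (subst (\<lambda>i. x i i) w @ inv_word (subst (\<lambda>i. x (\<sigma> i) i) w))
      \<le> ereal ((2 * real r + 1) * real (word_length w) ^ 2)" unfolding L_def .
qed

end
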